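(* Neither $Cond_{CB}$ nor $Lex_{CB}$ is universal: for each $R\in\{Cond,Lex\}$ there exist a stubbornness function $D$ and an epistemic space $\mathbb{S}$ that is identifiable in the limit (by some learner) but is not identifiable in the limit by $R_{CB}$ with stubbornness function $D$.
   Context: An epistemic space is a pair $\mathbb{S}=(S,\mathcal{O})$ where $S$ is a non-empty, at most countable set of worlds and $\mathcal{O}\subseteq\mathcal{P}(S)$ is a set of observables. A data stream is an infinite sequence $\vec O=(O_0,O_1,\ldots)$ with each $O_i\in\mathcal{O}$; $\vec O[n]=(O_0,\ldots,O_{n-1})$. A stream is sound for $s\in S$ if $s\in O_n$ for all $n$, and complete for $s$ if every $O\in\mathcal{O}$ with $s\in O$ occurs in $\vec O$. A learner is any function mapping $\mathbb{S}$ and finite data sequences to subsets of $S$. A world $s$ is identified in the limit by a learner $L$ if for every stream $\vec O$ sound and complete for $s$ there is $k$ with $L(\mathbb{S},\vec O[n])=\{s\}$ for all $n\ge k$; $\mathbb{S}$ is identified by $L$ if every $s\in S$ is; $\mathbb{S}$ is identifiable in the limit if some learner identifies it. A plausibility space is $\mathbb{B}=(S,\mathcal{O},\preceq)$ with $\preceq$ a total preorder on $S$; $\min_\preceq X$ is the set of $\preceq$-minimal elements of $X$. One-step methods, for a proposition $p\subseteq S$, $\bar p=S\setminus p$: - $Cond_1(\mathbb{B},p)=(S\cap p,\mathcal{O},\preceq\cap((S\cap p)\times(S\cap p)))$. - $Lex_1(\mathbb{B},p)=(S,\mathcal{O},\preceq')$ with $t\preceq' w$ iff ($t,w\in p$ and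 $t\preceq w$) or ($t,w\in\bar p$ and $t\preceq w$) or ($t\in p$, $w\notin p$). A stubbornness function is any $D:\mathcal{P}(S)\to\mathbb{N}$. For a one-step method $R_1$, $R_{CB}(\mathbb{B},\lambda)=\mathbb{B}$ and $R_{CB}(\mathbb{B},\sigma\cdot p)=R_1(R_{CB}(\mathbb{B},\sigma),p)$ if $\#p(\sigma)\ge D(\bar p)$, otherwise $R_{CB}(\mathbb{B},\sigma\cdot p)=R_{CB}(\mathbb{B},\sigma)$, where $\#p(\sigma)$ is the number of occurrences of $p$ in $\sigma$. $Cond_{CB}$, $Lex_{CB}$ arise from $R_1=Cond_1,Lex_1$. The learner $L^\preceq_{R_{CB}}$ maps $\sigma$ to $\min_{\preceq'}S'$ where $R_{CB}((S,\mathcal{O},\preceq),\sigma)=(S',\mathcal{O},\preceq')$. $\mathbb{S}$ is identifiable by $R_{CB}$ if some total preorder $\preceq$ makes $L^\preceq_{R_{CB}}$ identify $\mathbb{S}$ in the limit. A method is universal if it identifies every epistemic space that is identifiable in the limit. *)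

theory Defs
  imports Main "HOL-Library.Countable_Set"
begin

(* Worlds are natural numbers: every at most countable set of worlds embeds into nat. *)
type_synonym world = nat
type_synonym wprop = "world set"

definition epistemic_space :: "world set \<Rightarrow> wprop set \<Rightarrow> bool" where
  "epistemic_space S Obs \<longleftrightarrow> S \<noteq> {} \<and> countable S \<and> Obs \<subseteq> Pow S"

definition data_stream :: "wprop set \<Rightarrow> (nat \<Rightarrow> wprop) \<Rightarrow> bool" where
  "data_stream Obs f \<longleftrightarrow> (\<forall>i. f i \<in> Obs)"

definition prefix_of :: "(nat \<Rightarrow> wprop) \<Rightarrow> nat \<Rightarrow> wprop list" where
  "prefix_of f n = map f [0..<n]"

definition sound_for :: "(nat \<Rightarrow> wprop) \<Rightarrow> world \<Rightarrow> bool" where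
  "sound_for f s \<longleftrightarrow> (\<forall>n. s \<in> f n)"

definition complete_for :: "wprop set \<Rightarrow> (nat \<Rightarrow> wprop) \<Rightarrow> world \<Rightarrow> bool" where
  "complete_for Obs f s \<longleftrightarrow> (\<forall>A\<in>Obs. s \<in> A \<longrightarrow> (\<exists>n. f n = A))"

type_synonym learner = "world set \<Rightarrow> wprop set \<Rightarrow> wprop list \<Rightarrow> world set"

definition identifies_world :: "world set \<Rightarrow> wprop set \<Rightarrow> learner \<Rightarrow> world \<Rightarrow> bool" where
  "identifies_world S Obs L s \<longleftrightarrow>
     (\<forall>f. data_stream Obs f \<and> sound_for f s \<and> complete_for Obs f s \<longrightarrow>
          (\<exists>k. \<forall>n\<ge>k. L S Obs (prefix_of f n) = {s}))"

definition identifies :: "world set \<Rightarrow> wprop set \<Rightarrow> learner \<Rightarrow> bool" where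
  "identifies S Obs L \<longleftrightarrow> (\<forall>s\<in>S. identifies_world S Obs L s)"

definition identifiable :: "world set \<Rightarrow> wprop set \<Rightarrow> bool" where
  "identifiable S Obs \<longleftrightarrow> (\<exists>L. identifies S Obs L)"

text \<open>Plausibility state: current set of worlds and current plausibility relation
  (the observables never change, so they are not part of the state).\<close>
type_synonym pstate = "world set \<times> (world \<times> world) set"

definition cond1 :: "pstate \<Rightarrow> wprop \<Rightarrow> pstate" where
  "cond1 B p = (let S' = fst B \<inter> p in (S', snd B \<inter> (S' \<times> S')))"

definition lex1 :: "pstate \<Rightarrow> wprop \<Rightarrow> pstate" where
  "lex1 B p = (fst B,
     {(t, w). ((t, w) \<in> snd B \<and> t \<in> p \<and> w \<in> p)
            \<or> ((t, w) \<in> snd B \<and> t \<in> fst B - p \<and> w \<in> fst B - p)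
            \<or> (t \<in> fst B \<inter> p \<and> w \<in> fst B - p)})"

text \<open>Iterated revision with stubbornness D: R_CB(B, sigma . p) = R1(R_CB(B,sigma), p) if
  #p(sigma) >= D(S - p), else R_CB(B, sigma). The argument hist is the already processed
  prefix sigma; S is the set of worlds of the original space (complement taken there).\<close>
fun rcb_aux :: "(pstate \<Rightarrow> wprop \<Rightarrow> pstate) \<Rightarrow> (wprop \<Rightarrow> nat) \<Rightarrow> world set
                 \<Rightarrow> pstate \<Rightarrow> wprop list \<Rightarrow> wprop list \<Rightarrow> pstate" where
  "rcb_aux R1 D S B hist [] = B"
| "rcb_aux R1 D S B hist (p # ps) =
     rcb_aux R1 D S (if count_list hist p \<ge> D (S - p) then R1 B p else B) (hist @ [p]) ps"

definition rcb :: "(pstate \<Rightarrow> wprop \<Rightarrow> pstate) \<Rightarrow> (wprop \<Rightarrow> nat) \<Rightarrow> world set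
                 \<Rightarrow> pstate \<Rightarrow> wprop list \<Rightarrow> pstate" where
  "rcb R1 D S B \<sigma> = rcb_aux R1 D S B [] \<sigma>"

definition minimal_elems :: "(world \<times> world) set \<Rightarrow> world set \<Rightarrow> world set" where
  "minimal_elems R X = {x \<in> X. \<forall>y\<in>X. (y, x) \<in> R \<longrightarrow> (x, y) \<in> R}"

definition total_preorder_on :: "world set \<Rightarrow> (world \<times> world) set \<Rightarrow> bool" where
  "total_preorder_on S R \<longleftrightarrow> R \<subseteq> S \<times> S \<and> refl_on S R \<and> trans R \<and> total_on S R"

definition rcb_learner :: "(pstate \<Rightarrow> wprop \<Rightarrow> pstate) \<Rightarrow> (wprop \<Rightarrow> nat) \<Rightarrow> (world \<times> world) set
                            \<Rightarrow> learner" where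
  "rcb_learner R1 D R S Obs \<sigma> =
     (let B' = rcb R1 D S (S, R) \<sigma> in minimal_elems (snd B') (fst B'))"

definition identifiable_by_rcb :: "(pstate \<Rightarrow> wprop \<Rightarrow> pstate) \<Rightarrow> (wprop \<Rightarrow> nat)
                                   \<Rightarrow> world set \<Rightarrow> wprop set \<Rightarrow> bool" where
  "identifiable_by_rcb R1 D S Obs \<longleftrightarrow>
     (\<exists>R. total_preorder_on S R \<and> identifies S Obs (rcb_learner R1 D R))"

end

theory Submission
  imports Defs
begin

lemma rcb_aux_fix:
  "(\<forall>p\<in>set xs. R1 B p = B) \<Longrightarrow> rcb_aux R1 D S B h xs = B"
  by (induction xs arbitrary: h) auto

lemma lexfix: "R \<subseteq> S \<times> S \<Longrightarrow> lex1 (S, R) S = (S, R)"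
  unfolding lex1_def by auto

definition S01 :: "world set" where "S01 = {0, 1}"
definition Obs01 :: "wprop set" where "Obs01 = {S01, {1}}"

lemma es: "epistemic_space S01 Obs01"
  by (auto simp: epistemic_space_def S01_def Obs01_def)

lemma ident: "identifiable S01 Obs01"
proof -
  define L :: learner where "L = (\<lambda>S Obs \<sigma>. if {1} \<in> set \<sigma> then {1} else {0})"
  have "identifies S01 Obs01 L"
    unfolding identifies_def identifies_world_def
  proof (intro ballI allI impI)
    fix s f assume s: "s \<in> S01" and f: "data_stream Obs01 f \<and> sound_for f s \<and> complete_for Obs01 f s"
    show "\<exists>k. \<forall>n\<ge>k. L S01 Obs01 (prefix_of f n) = {s}"
    proof (cases "s = 0")
      case True
      have a: "\<forall>i. f i \<in> {S01, {1::nat}}" "\<forall>i. (0::nat) \<in> f i"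
        using f True by (auto simp: data_stream_def sound_for_def Obs01_def)
      have "\<forall>i. f i = S01" 
      proof
        fix i
        have "f i = S01 \<or> f i = {1}" "0 \<in> f i" using a by auto
        then show "f i = S01" by auto
      qed
      then show ?thesis using True
        by (auto simp: L_def prefix_of_def S01_def)
    next
      case False
      then have s1: "s = 1" using s by (auto simp: S01_def)
      then obtain m where m: "f m = {1}" using f by (auto simp: complete_for_def Obs01_def)
      show ?thesis
      proof (intro exI allI impI)
        fix n assume "Suc m \<le> n"
        then have "m \<in> set [0..<n]" by simp
        then have "f m \<in> set (map f [0..<n])" by simp
        then have "{1} \<in> set (prefix_of f n)" using m by (simp add: prefix_of_def)
        then show "L S01 Obs01 (prefix_of f n) = {s}" using s1 by (simp add: L_def)
      qed
    qed
  qed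
  then show ?thesis by (auto simp: identifiable_def)
qed

lemma not_ident:
  assumes R1: "\<And>R. R \<subseteq> S01 \<times> S01 \<Longrightarrow> R1 (S01, R) S01 = (S01, R)"
  shows "\<not> identifiable_by_rcb R1 (\<lambda>_. 1) S01 Obs01"
proof
  assume "identifiable_by_rcb R1 (\<lambda>_. 1) S01 Obs01"
  then obtain R where tp: "total_preorder_on S01 R"
    and id: "identifies S01 Obs01 (rcb_learner R1 (\<lambda>_. 1) R)"
    by (auto simp: identifiable_by_rcb_def)
  have RS: "R \<subseteq> S01 \<times> S01" using tp by (simp add: total_preorder_on_def)
  define f0 :: "nat \<Rightarrow> wprop" where "f0 = (\<lambda>_. S01)"
  define f1 :: "nat \<Rightarrow> wprop" where "f1 = (\<lambda>i. if i = 0 then {1} else S01)"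
  have "identifies_world S01 Obs01 (rcb_learner R1 (\<lambda>_. 1) R) 0"
    using id by (auto simp: identifies_def S01_def)
  moreover have "data_stream Obs01 f0 \<and> sound_for f0 0 \<and> complete_for Obs01 f0 0"
    by (auto simp: data_stream_def sound_for_def complete_for_def f0_def Obs01_def S01_def)
  ultimately obtain k0 where k0: "\<forall>n\<ge>k0. rcb_learner R1 (\<lambda>_. 1) R S01 Obs01 (prefix_of f0 n) = {0}"
    unfolding identifies_world_def by blast
  have "identifies_world S01 Obs01 (rcb_learner R1 (\<lambda>_. 1) R) 1"
    using id by (auto simp: identifies_def S01_def)
  moreover have "data_stream Obs01 f1 \<and> sound_for f1 1 \<and> complete_for Obs01 f1 1"
    by (auto simp: data_stream_def sound_for_def complete_for_def f1_def Obs01_def S01_def)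
  ultimately obtain k1 where k1: "\<forall>n\<ge>k1. rcb_learner R1 (\<lambda>_. 1) R S01 Obs01 (prefix_of f1 n) = {1}"
    unfolding identifies_world_def by blast
  define n where "n = Suc (k0 + k1)"
  have fixS: "R1 (S01, R) S01 = (S01, R)" using R1 RS by blast
  have "rcb R1 (\<lambda>_. 1) S01 (S01, R) (prefix_of f0 n) = (S01, R)"
    unfolding rcb_def prefix_of_def f0_def by (rule rcb_aux_fix) (auto simp: fixS)
  moreover have "rcb R1 (\<lambda>_. 1) S01 (S01, R) (prefix_of f1 n) = (S01, R)"
  proof -
    have "prefix_of f1 n = {1} # map (\<lambda>_. S01) [1..<n]"
      unfolding prefix_of_def f1_def n_def
      by (simp add: upt_conv_Cons del: upt_Suc)
    then show ?thesis
      unfolding rcb_def by (simp add: rcb_aux_fix fixS del: upt_Suc)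
  qed
  ultimately have "rcb_learner R1 (\<lambda>_. 1) R S01 Obs01 (prefix_of f0 n)
      = rcb_learner R1 (\<lambda>_. 1) R S01 Obs01 (prefix_of f1 n)"
    by (simp add: rcb_learner_def)
  moreover have "k0 \<le> n" "k1 \<le> n" unfolding n_def by simp_all
  ultimately have "{0::nat} = {1}" using k0 k1 by metis
  then show False by simp
qed

theorem mainTheorem2:
  shows "(\<exists>D S Obs. epistemic_space S Obs \<and> identifiable S Obs \<and> \<not> identifiable_by_rcb cond1 D S Obs)
       \<and> (\<exists>D S Obs. epistemic_space S Obs \<and> identifiable S Obs \<and> \<not> identifiable_by_rcb lex1 D S Obs)"
proof -
  have c: "\<not> identifiable_by_rcb cond1 (\<lambda>_. 1) S01 Obs01"
    by (rule not_ident) (auto simp: cond1_def Let_def)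
  have l: "\<not> identifiable_by_rcb lex1 (\<lambda>_. 1) S01 Obs01"
    by (rule not_ident, rule lexfix)
  show ?thesis using c l es ident by blast
qed

end
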